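(* Let $K=(C,\langle Q_i,1\le i\le k\rangle)$ and $K'=(C',\langle Q'_j,1\le j\le l\rangle)$ be two CMIs on $X_1,\dots,X_n$, both in pure form. Then $K\sim K'$ if and only if $\mathrm{can}(K)=\mathrm{can}(K')$.
   Context: Setting: $X_1,\dots,X_n$ are jointly distributed discrete random variables with $H(X_i)<\infty$ for all $i$; the joint distribution is otherwise unspecified. Write $\mathcal N_n=\{1,\dots,n\}$, $X_\alpha=(X_i,i\in\alpha)$ for $\alpha\subseteq\mathcal N_n$, and $X_\emptyset$ is a constant. A CMI (conditional mutual independency) is a pair $K=(C,\langle Q_1,\dots,Q_k\rangle)$ with $k\ge 0$, $C\subseteq\mathcal N_n$ and $\langle Q_1,\dots,Q_k\rangle$ an unordered finite collection (multiset: repetitions allowed, order immaterial) of subsets of $\mathcal N_n$. For a given joint distribution, $K$ is valid if $\sum_{i=1}^k H(X_{Q_i}|X_C)-H(X_{Q_1},\dots,X_{Q_k}|X_C)=0$ (automatic when $k\le 1$). Members $Q_j=\emptyset$ may be deleted without changing the CMI. Two CMIs are equal if their conditioning sets are equal and their collections are equal as multisets. $K\sim K'$ means: for every joint distribution of $X_1,\dots,X_n$, $K$ and $K'$ are both valid or both invalid. $K$ is degenerate if it is valid for every joint distribution; all degenerate CMIs are identified and denoted $(\cdot,\langle\ \rangle)$. Pure form: $K$ is in pure form if $Q_i\ne\emptyset$ and $Q_i\cap C=\emptyset$ for all $i$. Canonical form of a pure $K=(C,\langle Q_1,\dots,Q_k\rangle)$: if $k\ge2$, let $\mathbb I_K$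 be the set of indices $q$ lying in at least two members $Q_{i},Q_{i'}$ ($i\ne i'$) of the collection; if $k\le1$, $\mathbb I_K=\emptyset$. Let $P_1,\dots,P_t$ be the nonempty sets among $Q_1\setminus\mathbb I_K,\dots,Q_k\setminus\mathbb I_K$ (with multiplicity). Then $\mathrm{can}(K)=(\cdot,\langle\ \rangle)$ if $k\in\{0,1\}$; $\mathrm{can}(K)=(C,\langle\mathbb I_K,\mathbb I_K\rangle)$ if $k\ge2$, $\mathbb I_K\ne\emptyset$, $t\in\{0,1\}$; $\mathrm{can}(K)=(C,\langle P_1,\dots,P_t\rangle)$ if $k\ge2$, $\mathbb I_K=\emptyset$; $\mathrm{can}(K)=(C,\langle\mathbb I_K,\mathbb I_K,P_1,\dots,P_t\rangle)$ if $k\ge2$, $\mathbb I_K\ne\emptyset$, $t\ge2$. *)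

theory Defs
  imports "HOL-Probability.Probability_Mass_Function" "HOL-Library.Multiset"
begin

text \<open>A joint distribution of the discrete random variables X_1,...,X_n is a pmf on
  outcomes x :: nat => nat, where X_i is the coordinate x i (countable values, WLOG in nat).\<close>

type_synonym outcome = "nat \<Rightarrow> nat"

definition ent_ext :: "'a pmf \<Rightarrow> ennreal" where
  "ent_ext q = (\<integral>\<^sup>+ y. ennreal (- pmf q y * log 2 (pmf q y)) \<partial>count_space UNIV)"

definition ent :: "'a pmf \<Rightarrow> real" where
  "ent q = enn2real (ent_ext q)"

definition H :: "outcome pmf \<Rightarrow> (outcome \<Rightarrow> 'b) \<Rightarrow> real" where
  "H p Y = ent (map_pmf Y p)"

definition Hc :: "outcome pmf \<Rightarrow> (outcome \<Rightarrow> 'b) \<Rightarrow> (outcome \<Rightarrow> 'c) \<Rightarrow> real" where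
  "Hc p Y Z = H p (\<lambda>x. (Y x, Z x)) - H p Z"

definition Xs :: "nat set \<Rightarrow> outcome \<Rightarrow> (nat \<Rightarrow> nat)" where
  "Xs \<alpha> x = restrict x \<alpha>"

definition Xjoint :: "nat set multiset \<Rightarrow> outcome \<Rightarrow> (nat set \<Rightarrow> (nat \<Rightarrow> nat))" where
  "Xjoint Qs x = restrict (\<lambda>Q. Xs Q x) (set_mset Qs)"

definition finite_entropies :: "nat \<Rightarrow> outcome pmf \<Rightarrow> bool" where
  "finite_entropies n p \<longleftrightarrow> (\<forall>i\<in>{1..n}. ent_ext (map_pmf (\<lambda>x. x i) p) < \<infinity>)"

type_synonym cmi = "nat set \<times> nat set multiset"

definition is_cmi :: "nat \<Rightarrow> cmi \<Rightarrow> bool" where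
  "is_cmi n K \<longleftrightarrow> fst K \<subseteq> {1..n} \<and> (\<forall>Q\<in>#snd K. Q \<subseteq> {1..n})"

definition valid :: "outcome pmf \<Rightarrow> cmi \<Rightarrow> bool" where
  "valid p K \<longleftrightarrow> (case K of (C, Qs) \<Rightarrow>
     (\<Sum>Q\<in>#Qs. Hc p (Xs Q) (Xs C)) - Hc p (Xjoint Qs) (Xs C) = 0)"

definition cmi_equiv :: "nat \<Rightarrow> cmi \<Rightarrow> cmi \<Rightarrow> bool" where
  "cmi_equiv n K K' \<longleftrightarrow>
     (\<forall>p :: outcome pmf. finite_entropies n p \<longrightarrow> (valid p K \<longleftrightarrow> valid p K'))"

definition pure :: "cmi \<Rightarrow> bool" where
  "pure K \<longleftrightarrow> (\<forall>Q\<in>#snd K. Q \<noteq> {} \<and> Q \<inter> fst K = {})"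

definition IK :: "nat set multiset \<Rightarrow> nat set" where
  "IK Qs = (if size Qs \<le> 1 then {} else {q. 2 \<le> size (filter_mset (\<lambda>Q. q \<in> Q) Qs)})"

definition Ps :: "nat set multiset \<Rightarrow> nat set multiset" where
  "Ps Qs = filter_mset (\<lambda>P. P \<noteq> {}) (image_mset (\<lambda>Q. Q - IK Qs) Qs)"

text \<open>Canonical form; None stands for the degenerate CMI.\<close>
definition can :: "cmi \<Rightarrow> cmi option" where
  "can K = (case K of (C, Qs) \<Rightarrow>
     if size Qs \<le> 1 then None
     else if IK Qs \<noteq> {} \<and> size (Ps Qs) \<le> 1 then Some (C, {#IK Qs, IK Qs#})
     else if IK Qs = {} then Some (C, Ps Qs)
     else Some (C, {#IK Qs, IK Qs#} + Ps Qs))"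

end

theory Submission
  imports Defs
begin

lemma neglog_nonneg: "0 \<le> a \<Longrightarrow> a \<le> 1 \<Longrightarrow> 0 \<le> - log 2 (a::real)"
  by (cases "a = 0") (auto simp: log_def divide_nonpos_pos ln_le_zero_iff)

lemma ent_pt: "ennreal (- pmf q y * log 2 (pmf q y)) = ennreal (pmf q y) * ennreal (- log 2 (pmf q y))"
proof -
  have "- pmf q y * log 2 (pmf q y) = pmf q y * (- log 2 (pmf q y))" by simp
  moreover have "ennreal (pmf q y * (- log 2 (pmf q y))) = ennreal (pmf q y) * ennreal (- log 2 (pmf q y))"
    by (rule ennreal_mult) (use neglog_nonneg[of "pmf q y"] pmf_le_1[of q y] in auto)
  ultimately show ?thesis by simp
qed

lemma ent_ext_expect:
  "ent_ext (map_pmf Y p) = (\<integral>\<^sup>+ \<omega>. ennreal (- log 2 (pmf (map_pmf Y p) (Y \<omega>))) \<partial>measure_pmf p)"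
proof -
  have "ent_ext (map_pmf Y p) = (\<integral>\<^sup>+ y. ennreal (pmf (map_pmf Y p) y) * ennreal (- log 2 (pmf (map_pmf Y p) y)) \<partial>count_space UNIV)"
    unfolding ent_ext_def
    by (intro nn_integral_cong) (rule ent_pt)
  also have "\<dots> = (\<integral>\<^sup>+ y. ennreal (- log 2 (pmf (map_pmf Y p) y)) \<partial>measure_pmf (map_pmf Y p))"
    by (simp add: nn_integral_measure_pmf)
  also have "\<dots> = (\<integral>\<^sup>+ \<omega>. ennreal (- log 2 (pmf (map_pmf Y p) (Y \<omega>))) \<partial>measure_pmf p)"
    by simp
  finally show ?thesis .
qed

lemma pm_pos: "\<omega> \<in> set_pmf p \<Longrightarrow> 0 < pmf (map_pmf Y p) (Y \<omega>)"
  by (simp add: pmf_positive)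

lemma ent_mono:
  assumes "\<And>\<omega> \<omega>'. Y2 \<omega> = Y2 \<omega>' \<Longrightarrow> Y1 \<omega> = Y1 \<omega>'"
  shows "ent_ext (map_pmf Y1 p) \<le> ent_ext (map_pmf Y2 p)"
  unfolding ent_ext_expect
proof (rule nn_integral_mono_AE)
  show "AE \<omega> in measure_pmf p. ennreal (- log 2 (pmf (map_pmf Y1 p) (Y1 \<omega>))) \<le> ennreal (- log 2 (pmf (map_pmf Y2 p) (Y2 \<omega>)))"
  proof (rule AE_pmfI)
    fix \<omega> assume w: "\<omega> \<in> set_pmf p"
    have "pmf (map_pmf Y2 p) (Y2 \<omega>) \<le> pmf (map_pmf Y1 p) (Y1 \<omega>)"
      unfolding pmf_map
      by (rule measure_pmf.finite_measure_mono) (auto dest: assms)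
    moreover have "0 < pmf (map_pmf Y2 p) (Y2 \<omega>)" using w by (rule pm_pos)
    ultimately show "ennreal (- log 2 (pmf (map_pmf Y1 p) (Y1 \<omega>))) \<le> ennreal (- log 2 (pmf (map_pmf Y2 p) (Y2 \<omega>)))"
      by (intro ennreal_leI) simp
  qed
qed

lemma ent_eq:
  assumes "\<And>\<omega> \<omega>'. Y2 \<omega> = Y2 \<omega>' \<longleftrightarrow> Y1 \<omega> = Y1 \<omega>'"
  shows "ent_ext (map_pmf Y1 p) = ent_ext (map_pmf Y2 p)"
  using ent_mono[of Y2 Y1 p] ent_mono[of Y1 Y2 p] assms by (auto intro: antisym)


definition coup :: "'a pmf \<Rightarrow> ('a \<Rightarrow> 'b) \<Rightarrow> ('a \<Rightarrow> 'c) \<Rightarrow> ('a \<Rightarrow> 'd) \<Rightarrow> ('b \<times> 'c \<times> 'd) pmf" where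
  "coup p X Y Z = bind_pmf p (\<lambda>\<omega>1. map_pmf (Pair (X \<omega>1))
      (cond_pmf (map_pmf (\<lambda>\<omega>. (Y \<omega>, Z \<omega>)) p) {t. snd t = Z \<omega>1}))"

lemma coup_inner:
  assumes w1: "\<omega>1 \<in> set_pmf p"
  shows "pmf (map_pmf (Pair (X \<omega>1))
      (cond_pmf (map_pmf (\<lambda>\<omega>. (Y \<omega>, Z \<omega>)) p) {t. snd t = Z \<omega>1})) (x, y, z)
    = indicator {\<omega>1. X \<omega>1 = x \<and> Z \<omega>1 = z} \<omega>1 *
      (pmf (map_pmf (\<lambda>\<omega>. (Y \<omega>, Z \<omega>)) p) (y, z) / pmf (map_pmf Z p) z)"
proof -
  let ?M = "map_pmf (\<lambda>\<omega>. (Y \<omega>, Z \<omega>)) p"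
  let ?S = "{t. snd t = Z \<omega>1}"
  have ne: "set_pmf ?M \<inter> ?S \<noteq> {}" using w1 by auto
  have vim: "Pair (X \<omega>1) -` {(x, y, z)} = (if X \<omega>1 = x then {(y,z)} else {})"
    by auto
  have mS: "measure ?M ?S = pmf (map_pmf Z p) (Z \<omega>1)"
    by (simp add: pmf_map vimage_def)
  have mS': "measure p {y. Z y = Z \<omega>1} = pmf (map_pmf Z p) (Z \<omega>1)"
    by (simp add: pmf_map vimage_def)
  have "pmf (map_pmf (Pair (X \<omega>1)) (cond_pmf ?M ?S)) (x, y, z) = measure (cond_pmf ?M ?S) (Pair (X \<omega>1) -` {(x, y, z)})"
    by (rule pmf_map)
  also have "\<dots> = (if X \<omega>1 = x then pmf (cond_pmf ?M ?S) (y,z) else 0)"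
    unfolding vim by (simp add: measure_pmf_single)
  also have "\<dots> = indicator {\<omega>1. X \<omega>1 = x \<and> Z \<omega>1 = z} \<omega>1 * (pmf ?M (y, z) / pmf (map_pmf Z p) z)"
    using ne by (auto simp: pmf_cond[OF ne] mS mS' indicator_def)
  finally show ?thesis .
qed

lemma coup_pmf:
  assumes w: "\<omega> \<in> set_pmf p"
  shows "pmf (coup p X Y Z) (X \<omega>, Y \<omega>, Z \<omega>) =
    pmf (map_pmf (\<lambda>\<omega>. (X \<omega>, Z \<omega>)) p) (X \<omega>, Z \<omega>) * pmf (map_pmf (\<lambda>\<omega>. (Y \<omega>, Z \<omega>)) p) (Y \<omega>, Z \<omega>)
      / pmf (map_pmf Z p) (Z \<omega>)"
proof -
  let ?c = "pmf (map_pmf (\<lambda>\<omega>. (Y \<omega>, Z \<omega>)) p) (Y \<omega>, Z \<omega>) / pmf (map_pmf Z p) (Z \<omega>)"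
  let ?A = "{\<omega>1. X \<omega>1 = X \<omega> \<and> Z \<omega>1 = Z \<omega>}"
  have "pmf (coup p X Y Z) (X \<omega>, Y \<omega>, Z \<omega>) = (\<integral>\<omega>1. indicator ?A \<omega>1 * ?c \<partial>measure_pmf p)"
    unfolding coup_def pmf_bind
    by (intro integral_cong_AE) (auto intro!: AE_pmfI simp: coup_inner)
  also have "\<dots> = measure p ?A * ?c" by simp
  also have "measure p ?A = pmf (map_pmf (\<lambda>\<omega>. (X \<omega>, Z \<omega>)) p) (X \<omega>, Z \<omega>)"
    by (simp add: pmf_map vimage_def)
  finally show ?thesis by simp
qed


lemma key_real:
  fixes a b c d :: real
  assumes "0 < a" "0 < b" "0 < c" "0 < d"
  shows "- log 2 a + - log 2 d + 1 / ln 2 \<le> - log 2 b + - log 2 c + (b * c / (d * a)) / ln 2"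
proof -
  define r where "r = b * c / (d * a)"
  have rpos: "0 < r" using assms by (simp add: r_def)
  have lr: "ln r = ln b + ln c - ln d - ln a"
    using assms by (simp add: r_def ln_mult ln_div)
  have "ln r \<le> r - 1" using rpos by (rule ln_le_minus_one)
  then have "ln r / ln 2 \<le> (r - 1) / ln 2" by (simp add: divide_right_mono)
  then show ?thesis unfolding log_def lr r_def[symmetric]
    by (simp add: diff_divide_distrib add_divide_distrib)
qed

lemma en3: "0 \<le> u \<Longrightarrow> 0 \<le> v \<Longrightarrow> 0 \<le> w \<Longrightarrow> ennreal (u + v + w) = ennreal u + ennreal v + ennreal w"
  by (simp add: ennreal_plus)

lemma ratio_int:
  fixes p :: "'a pmf" and X :: "'a \<Rightarrow> 'b" and Y :: "'a \<Rightarrow> 'c" and Z :: "'a \<Rightarrow> 'd"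
  defines "T \<equiv> (\<lambda>\<omega>. (X \<omega>, Y \<omega>, Z \<omega>))"
  shows "(\<integral>\<^sup>+ \<omega>. ennreal (pmf (coup p X Y Z) (T \<omega>) / pmf (map_pmf T p) (T \<omega>)) \<partial>measure_pmf p) \<le> 1"
proof -
  let ?q = "coup p X Y Z" and ?\<mu> = "map_pmf T p"
  have "(\<integral>\<^sup>+ \<omega>. ennreal (pmf ?q (T \<omega>) / pmf ?\<mu> (T \<omega>)) \<partial>measure_pmf p)
      = (\<integral>\<^sup>+ t. ennreal (pmf ?q t / pmf ?\<mu> t) \<partial>measure_pmf ?\<mu>)"
    by simp
  also have "\<dots> = (\<integral>\<^sup>+ t. ennreal (pmf ?\<mu> t) * ennreal (pmf ?q t / pmf ?\<mu> t) \<partial>count_space UNIV)"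
    by (rule nn_integral_measure_pmf)
  also have "\<dots> \<le> (\<integral>\<^sup>+ t. ennreal (pmf ?q t) \<partial>count_space UNIV)"
  proof (intro nn_integral_mono)
    fix t
    have "pmf ?\<mu> t * (pmf ?q t / pmf ?\<mu> t) \<le> pmf ?q t"
      by (cases "pmf ?\<mu> t = 0") auto
    then show "ennreal (pmf ?\<mu> t) * ennreal (pmf ?q t / pmf ?\<mu> t) \<le> ennreal (pmf ?q t)"
      by (simp add: ennreal_mult[symmetric] ennreal_leI)
  qed
  also have "\<dots> = 1" by (simp add: nn_integral_pmf emeasure_pmf)
  finally show ?thesis .
qed

lemma ent_submod:
  fixes p :: "'a pmf"
  shows "ent_ext (map_pmf (\<lambda>\<omega>. (X \<omega>, Y \<omega>, Z \<omega>)) p) + ent_ext (map_pmf Z p)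
    \<le> ent_ext (map_pmf (\<lambda>\<omega>. (X \<omega>, Z \<omega>)) p) + ent_ext (map_pmf (\<lambda>\<omega>. (Y \<omega>, Z \<omega>)) p)"
proof -
  define T where "T = (\<lambda>\<omega>. (X \<omega>, Y \<omega>, Z \<omega>))"
  define XZ where "XZ = (\<lambda>\<omega>. (X \<omega>, Z \<omega>))"
  define YZ where "YZ = (\<lambda>\<omega>. (Y \<omega>, Z \<omega>))"
  define A where "A = (\<lambda>\<omega>. ennreal (- log 2 (pmf (map_pmf T p) (T \<omega>))))"
  define B where "B = (\<lambda>\<omega>. ennreal (- log 2 (pmf (map_pmf XZ p) (XZ \<omega>))))"
  define C where "C = (\<lambda>\<omega>. ennreal (- log 2 (pmf (map_pmf YZ p) (YZ \<omega>))))"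
  define D where "D = (\<lambda>\<omega>. ennreal (- log 2 (pmf (map_pmf Z p) (Z \<omega>))))"
  define R where "R = (\<lambda>\<omega>. ennreal (pmf (coup p X Y Z) (T \<omega>) / pmf (map_pmf T p) (T \<omega>)))"
  define k where "k = ennreal (1 / ln 2)"
  have kfin: "k \<noteq> \<infinity>" by (simp add: k_def)
  have pt: "A \<omega> + D \<omega> + k \<le> B \<omega> + C \<omega> + k * R \<omega>" if w: "\<omega> \<in> set_pmf p" for \<omega>
  proof -
    let ?a = "pmf (map_pmf T p) (T \<omega>)" and ?b = "pmf (map_pmf XZ p) (XZ \<omega>)"
    let ?c = "pmf (map_pmf YZ p) (YZ \<omega>)" and ?d = "pmf (map_pmf Z p) (Z \<omega>)"
    have pos: "0 < ?a" "0 < ?b" "0 < ?c" "0 < ?d" using w by (simp_all add: pm_pos)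
    have le1: "?a \<le> 1" "?b \<le> 1" "?c \<le> 1" "?d \<le> 1" by (simp_all add: pmf_le_1)
    have qv: "pmf (coup p X Y Z) (T \<omega>) = ?b * ?c / ?d"
      using coup_pmf[OF w, of X Y Z] by (simp add: T_def XZ_def YZ_def)
    have Rv: "R \<omega> = ennreal (?b * ?c / (?d * ?a))"
      by (simp add: R_def qv)
    have "ennreal (- log 2 ?a + - log 2 ?d + 1 / ln 2) \<le> ennreal (- log 2 ?b + - log 2 ?c + (?b * ?c / (?d * ?a)) / ln 2)"
      by (intro ennreal_leI key_real pos)
    also have "ennreal (- log 2 ?b + - log 2 ?c + (?b * ?c / (?d * ?a)) / ln 2) = B \<omega> + C \<omega> + k * R \<omega>"
    proof -
      have x0: "0 \<le> ?b * ?c / (?d * ?a)" using pos by simp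
      have "k * R \<omega> = ennreal (1 / ln 2 * (?b * ?c / (?d * ?a)))"
        unfolding k_def Rv by (rule ennreal_mult[symmetric]) (use x0 in auto)
      also have "1 / ln 2 * (?b * ?c / (?d * ?a)) = (?b * ?c / (?d * ?a)) / ln 2" by simp
      finally have kR: "k * R \<omega> = ennreal ((?b * ?c / (?d * ?a)) / ln 2)" .
      show ?thesis unfolding kR B_def C_def
        by (rule en3) (use pos le1 neglog_nonneg[of ?b] neglog_nonneg[of ?c] x0 in auto)
    qed
    also have "ennreal (- log 2 ?a + - log 2 ?d + 1 / ln 2) = A \<omega> + D \<omega> + k"
      unfolding A_def D_def k_def
      by (rule en3) (use pos le1 neglog_nonneg[of ?a] neglog_nonneg[of ?d] in auto)
    finally show ?thesis .
  qed
  have "(\<integral>\<^sup>+\<omega>. A \<omega> \<partial>p) + (\<integral>\<^sup>+\<omega>. D \<omega> \<partial>p) + k = (\<integral>\<^sup>+\<omega>. A \<omega> + D \<omega> + k \<partial>p)"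
    by (simp add: nn_integral_add emeasure_pmf)
  also have "\<dots> \<le> (\<integral>\<^sup>+\<omega>. B \<omega> + C \<omega> + k * R \<omega> \<partial>p)"
    by (intro nn_integral_mono_AE AE_pmfI pt)
  also have "\<dots> = (\<integral>\<^sup>+\<omega>. B \<omega> \<partial>p) + (\<integral>\<^sup>+\<omega>. C \<omega> \<partial>p) + k * (\<integral>\<^sup>+\<omega>. R \<omega> \<partial>p)"
    by (simp add: nn_integral_add nn_integral_cmult)
  also have "\<dots> \<le> (\<integral>\<^sup>+\<omega>. B \<omega> \<partial>p) + (\<integral>\<^sup>+\<omega>. C \<omega> \<partial>p) + k * 1"
    using ratio_int[of p X Y Z] unfolding R_def T_def
    by (intro add_left_mono mult_left_mono) auto
  finally have "(\<integral>\<^sup>+\<omega>. A \<omega> \<partial>p) + (\<integral>\<^sup>+\<omega>. D \<omega> \<partial>p) + k \<le> (\<integral>\<^sup>+\<omega>. B \<omega> \<partial>p) + (\<integral>\<^sup>+\<omega>. C \<omega> \<partial>p) + k"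
    by simp
  then have "(\<integral>\<^sup>+\<omega>. A \<omega> \<partial>p) + (\<integral>\<^sup>+\<omega>. D \<omega> \<partial>p) \<le> (\<integral>\<^sup>+\<omega>. B \<omega> \<partial>p) + (\<integral>\<^sup>+\<omega>. C \<omega> \<partial>p)"
    using kfin by (metis add.commute ennreal_add_left_cancel_le)
  then show ?thesis
    unfolding ent_ext_expect A_def B_def C_def D_def T_def XZ_def YZ_def .
qed


lemma Xs_eq: "Xs A x = Xs A x' \<longleftrightarrow> (\<forall>j\<in>A. x j = x' j)"
  unfolding Xs_def by (metis restrict_apply' restrict_ext)

definition Fe :: "outcome pmf \<Rightarrow> nat set \<Rightarrow> ennreal" where
  "Fe p A = ent_ext (map_pmf (Xs A) p)"

lemma ent_return: "ent_ext (return_pmf c) = 0"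
proof -
  have "\<And>y. ennreal (- pmf (return_pmf c) y * log 2 (pmf (return_pmf c) y)) = 0"
    by (case_tac "c = y") auto
  then show ?thesis unfolding ent_ext_def by simp
qed

lemma Fe_empty: "Fe p {} = 0"
proof -
  have "Xs {} = (\<lambda>_. Xs {} (\<lambda>_. 0))" by (auto simp: fun_eq_iff Xs_def)
  then show ?thesis unfolding Fe_def by (metis map_pmf_const ent_return)
qed

lemma Fe_mono: "A \<subseteq> B \<Longrightarrow> Fe p A \<le> Fe p B"
  unfolding Fe_def by (rule ent_mono) (auto simp: Xs_eq)

lemma Fe_submod: "Fe p (A \<union> B) + Fe p (A \<inter> B) \<le> Fe p A + Fe p B"
proof -
  have 1: "ent_ext (map_pmf (\<lambda>\<omega>. (Xs A \<omega>, Xs B \<omega>, Xs (A \<inter> B) \<omega>)) p) = Fe p (A \<union> B)"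
    unfolding Fe_def by (rule ent_eq) (auto simp: Xs_eq)
  have 2: "ent_ext (map_pmf (\<lambda>\<omega>. (Xs A \<omega>, Xs (A \<inter> B) \<omega>)) p) = Fe p A"
    unfolding Fe_def by (rule ent_eq) (auto simp: Xs_eq)
  have 3: "ent_ext (map_pmf (\<lambda>\<omega>. (Xs B \<omega>, Xs (A \<inter> B) \<omega>)) p) = Fe p B"
    unfolding Fe_def by (rule ent_eq) (auto simp: Xs_eq)
  show ?thesis
    using ent_submod[of "Xs A" "Xs B" "Xs (A \<inter> B)" p] unfolding 1 2 3 by (simp add: Fe_def)
qed

lemma Fe_single: "Fe p {i} = ent_ext (map_pmf (\<lambda>x. x i) p)"
  unfolding Fe_def by (rule ent_eq) (auto simp: Xs_eq)

lemma Fe_fin: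
  assumes fe: "finite_entropies n p" and A: "A \<subseteq> {1..n}"
  shows "Fe p A < \<infinity>"
proof -
  have "finite A" using A finite_subset by blast
  then show ?thesis using A
  proof (induction A rule: finite_induct)
    case empty then show ?case by (simp add: Fe_empty)
  next
    case (insert i A)
    have "Fe p (A \<union> {i}) + Fe p (A \<inter> {i}) \<le> Fe p A + Fe p {i}" by (rule Fe_submod)
    moreover have "A \<inter> {i} = {}" using insert by auto
    moreover have "Fe p {i} < \<infinity>" using fe insert.prems unfolding finite_entropies_def Fe_single by auto
    ultimately have "Fe p (A \<union> {i}) \<le> Fe p A + Fe p {i}" by (simp add: Fe_empty)
    moreover have "Fe p A + Fe p {i} < \<infinity>" using insert \<open>Fe p {i} < \<infinity>\<close> by simp
    ultimately show ?case by (metis Un_insert_right sup_bot.right_neutral order_le_less_trans)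
  qed
qed

lemma H_Xs: "H p (Xs A) = enn2real (Fe p A)"
  by (simp add: H_def ent_def Fe_def)

lemma Hc_Xs: "Hc p (Xs Q) (Xs C) = enn2real (Fe p (Q \<union> C)) - enn2real (Fe p C)"
proof -
  have "ent_ext (map_pmf (\<lambda>x. (Xs Q x, Xs C x)) p) = Fe p (Q \<union> C)"
    unfolding Fe_def by (rule ent_eq) (auto simp: Xs_eq)
  then show ?thesis by (simp add: Hc_def H_def ent_def Fe_def)
qed

lemma Hc_joint: "Hc p (Xjoint Qs) (Xs C) = enn2real (Fe p (\<Union>(set_mset Qs) \<union> C)) - enn2real (Fe p C)"
proof -
  have "ent_ext (map_pmf (\<lambda>x. (Xjoint Qs x, Xs C x)) p) = Fe p (\<Union>(set_mset Qs) \<union> C)"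
    unfolding Fe_def
  proof (rule ent_eq)
    fix \<omega> \<omega>' :: outcome
    show "(Xs (\<Union>(set_mset Qs) \<union> C) \<omega> = Xs (\<Union>(set_mset Qs) \<union> C) \<omega>') \<longleftrightarrow>
          ((Xjoint Qs \<omega>, Xs C \<omega>) = (Xjoint Qs \<omega>', Xs C \<omega>'))"
    proof
      assume h: "Xs (\<Union>(set_mset Qs) \<union> C) \<omega> = Xs (\<Union>(set_mset Qs) \<union> C) \<omega>'"
      then have "Xs Q \<omega> = Xs Q \<omega>'" if "Q \<in># Qs" for Q using that unfolding Xs_eq by blast
      moreover have "Xs C \<omega> = Xs C \<omega>'" using h unfolding Xs_eq by blast
      ultimately show "(Xjoint Qs \<omega>, Xs C \<omega>) = (Xjoint Qs \<omega>', Xs C \<omega>')"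
        unfolding Xjoint_def by (auto intro: restrict_ext)
    next
      assume h: "(Xjoint Qs \<omega>, Xs C \<omega>) = (Xjoint Qs \<omega>', Xs C \<omega>')"
      have "\<omega> j = \<omega>' j" if jin: "j \<in> \<Union>(set_mset Qs) \<union> C" for j
      proof (cases "j \<in> C")
        case True
        have "Xs C \<omega> = Xs C \<omega>'" using h by simp
        then show ?thesis using True unfolding Xs_eq by auto
      next
        case False
        then obtain Q where Q: "Q \<in># Qs" "j \<in> Q" using jin False by auto
        have "Xjoint Qs \<omega> Q = Xjoint Qs \<omega>' Q" using h by simp
        then have "Xs Q \<omega> = Xs Q \<omega>'" using Q unfolding Xjoint_def by simp
        then show ?thesis using Q unfolding Xs_eq by auto
      qed
      then show "Xs (\<Union>(set_mset Qs) \<union> C) \<omega> = Xs (\<Union>(set_mset Qs) \<union> C) \<omega>'"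
        unfolding Xs_eq by blast
    qed
  qed
  then show ?thesis by (simp add: Hc_def H_def ent_def Fe_def)
qed

definition gC :: "outcome pmf \<Rightarrow> nat set \<Rightarrow> nat set \<Rightarrow> real" where
  "gC p C A = enn2real (Fe p (A \<union> C)) - enn2real (Fe p C)"

definition Dg :: "(nat set \<Rightarrow> real) \<Rightarrow> nat set multiset \<Rightarrow> real" where
  "Dg g Qs = (\<Sum>Q\<in>#Qs. g Q) - g (\<Union>(set_mset Qs))"

lemma valid_Dg: "valid p (C, Qs) \<longleftrightarrow> Dg (gC p C) Qs = 0"
  unfolding valid_def Dg_def gC_def by (simp add: Hc_Xs Hc_joint)


definition polym :: "(nat set \<Rightarrow> real) \<Rightarrow> nat set \<Rightarrow> bool" where
  "polym g U \<longleftrightarrow> g {} = 0 \<and> (\<forall>A B. A \<subseteq> B \<and> B \<subseteq> U \<longrightarrow> g A \<le> g B)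
     \<and> (\<forall>A B. A \<subseteq> U \<and> B \<subseteq> U \<longrightarrow> g (A \<union> B) + g (A \<inter> B) \<le> g A + g B)"

lemma gC_polym:
  assumes fe: "finite_entropies n p" and C: "C \<subseteq> {1..n}"
  shows "polym (gC p C) {1..n}"
  unfolding polym_def
proof (intro conjI allI impI)
  show "gC p C {} = 0" by (simp add: gC_def)
next
  fix A B assume h: "A \<subseteq> B \<and> B \<subseteq> {1..n}"
  have "Fe p (A \<union> C) \<le> Fe p (B \<union> C)" using h by (intro Fe_mono) auto
  moreover have "Fe p (B \<union> C) < \<infinity>" using h C by (intro Fe_fin[OF fe]) auto
  ultimately show "gC p C A \<le> gC p C B" unfolding gC_def using enn2real_mono by auto
next
  fix A B assume h: "A \<subseteq> {1..n} \<and> B \<subseteq> {1..n}"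
  have fin: "Fe p X < \<infinity>" if "X \<subseteq> {1..n}" for X using that by (rule Fe_fin[OF fe])
  have "Fe p ((A \<union> C) \<union> (B \<union> C)) + Fe p ((A \<union> C) \<inter> (B \<union> C)) \<le> Fe p (A \<union> C) + Fe p (B \<union> C)"
    by (rule Fe_submod)
  moreover have "(A \<union> C) \<union> (B \<union> C) = (A \<union> B) \<union> C" "(A \<union> C) \<inter> (B \<union> C) = (A \<inter> B) \<union> C" by auto
  ultimately have le: "Fe p ((A \<union> B) \<union> C) + Fe p ((A \<inter> B) \<union> C) \<le> Fe p (A \<union> C) + Fe p (B \<union> C)" by simp
  have f1: "Fe p ((A \<union> B) \<union> C) < \<infinity>" "Fe p ((A \<inter> B) \<union> C) < \<infinity>" "Fe p (A \<union> C) < \<infinity>" "Fe p (B \<union> C) < \<infinity>"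
    using fin[of "(A \<union> B) \<union> C"] fin[of "(A \<inter> B) \<union> C"] fin[of "A \<union> C"] fin[of "B \<union> C"] h C
    by (simp_all add: le_supI) (blast intro: le_supI)
  have "enn2real (Fe p ((A \<union> B) \<union> C) + Fe p ((A \<inter> B) \<union> C)) \<le> enn2real (Fe p (A \<union> C) + Fe p (B \<union> C))"
    using le f1 by (intro enn2real_mono) auto
  then show "gC p C (A \<union> B) + gC p C (A \<inter> B) \<le> gC p C A + gC p C B"
    unfolding gC_def using f1 by (simp add: enn2real_plus)
qed

context
  fixes g :: "nat set \<Rightarrow> real" and U :: "nat set"
  assumes pg: "polym g U"
begin

lemma g0: "g {} = 0" using pg by (simp add: polym_def)
lemma gmono: "A \<subseteq> B \<Longrightarrow> B \<subseteq> U \<Longrightarrow> g A \<le> g B" using pg by (simp add: polym_def)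
lemma gsub: "A \<subseteq> U \<Longrightarrow> B \<subseteq> U \<Longrightarrow> g (A \<union> B) + g (A \<inter> B) \<le> g A + g B" using pg by (simp add: polym_def)
lemma gnn: "A \<subseteq> U \<Longrightarrow> 0 \<le> g A" using gmono[of "{}" A] g0 by simp
lemma gadd: "A \<subseteq> U \<Longrightarrow> B \<subseteq> U \<Longrightarrow> g (A \<union> B) \<le> g A + g B"
proof -
  assume a: "A \<subseteq> U" "B \<subseteq> U"
  then have "A \<inter> B \<subseteq> U" by blast
  then show ?thesis using gsub[OF a] gnn[of "A \<inter> B"] by linarith
qed

lemma gU: "(\<forall>Q\<in>#Qs. Q \<subseteq> U) \<Longrightarrow> g (\<Union>(set_mset Qs)) \<le> (\<Sum>Q\<in>#Qs. g Q)"
proof (induction Qs)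
  case empty then show ?case by (simp add: g0)
next
  case (add Q M)
  have "g (\<Union>(set_mset (add_mset Q M))) = g (Q \<union> \<Union>(set_mset M))" by simp
  also have "\<dots> \<le> g Q + g (\<Union>(set_mset M))" using add.prems by (intro gadd) auto
  also have "\<dots> \<le> g Q + (\<Sum>Q\<in>#M. g Q)" using add by simp
  finally show ?case by simp
qed

lemma Dg_nn: "(\<forall>Q\<in>#Qs. Q \<subseteq> U) \<Longrightarrow> 0 \<le> Dg g Qs"
  using gU unfolding Dg_def by simp

lemma gabsorb: "A \<subseteq> U \<Longrightarrow> J \<subseteq> U \<Longrightarrow> g J = 0 \<Longrightarrow> g (A \<union> J) = g A"
  using gmono[of A "A \<union> J"] gadd[of A J] by auto

lemma Dg_pair:
  assumes "\<forall>Q\<in>#add_mset Q1 (add_mset Q2 R). Q \<subseteq> U"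
  shows "g (Q1 \<inter> Q2) \<le> Dg g (add_mset Q1 (add_mset Q2 R))"
proof -
  have s: "Q1 \<subseteq> U" "Q2 \<subseteq> U" "\<forall>Q\<in>#R. Q \<subseteq> U" using assms by auto
  have "g (\<Union>(set_mset (add_mset Q1 (add_mset Q2 R)))) = g ((Q1 \<union> Q2) \<union> \<Union>(set_mset R))"
    by (simp add: Un_assoc)
  also have "\<dots> \<le> g (Q1 \<union> Q2) + g (\<Union>(set_mset R))" using s by (intro gadd) auto
  also have "\<dots> \<le> g (Q1 \<union> Q2) + (\<Sum>Q\<in>#R. g Q)" using gU[OF s(3)] by simp
  finally have "g (\<Union>(set_mset (add_mset Q1 (add_mset Q2 R)))) \<le> g (Q1 \<union> Q2) + (\<Sum>Q\<in>#R. g Q)" .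
  moreover have "g (Q1 \<union> Q2) + g (Q1 \<inter> Q2) \<le> g Q1 + g Q2" using s by (intro gsub)
  ultimately show ?thesis unfolding Dg_def by simp
qed

lemma g_finite_sum: "finite I \<Longrightarrow> I \<subseteq> U \<Longrightarrow> g I \<le> (\<Sum>q\<in>I. g {q})"
proof (induction I rule: finite_induct)
  case empty then show ?case by (simp add: g0)
next
  case (insert q I)
  have "g (insert q I) = g ({q} \<union> I)" by simp
  also have "\<dots> \<le> g {q} + g I" using insert.prems by (intro gadd) auto
  also have "\<dots> \<le> g {q} + (\<Sum>q\<in>I. g {q})" using insert by simp
  finally show ?case using insert by simp
qed

lemma sum_filter_zero:
  "(\<forall>x\<in>#M. \<not> P x \<longrightarrow> f x = (0::real)) \<Longrightarrow> (\<Sum>x\<in>#M. f x) = (\<Sum>x\<in>#filter_mset P M. f x)"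
  by (induction M) auto

lemma Dg_strip:
  assumes QU: "\<forall>Q\<in>#Qs. Q \<subseteq> U" and IU: "I \<subseteq> U" and gI: "g I = 0"
  shows "Dg g Qs = Dg g (filter_mset (\<lambda>P. P \<noteq> {}) (image_mset (\<lambda>Q. Q - I) Qs))"
proof -
  have gJ: "g J = 0" if "J \<subseteq> I" for J using gmono[OF that IU] gnn[of J] that IU gI by auto
  have e1: "g Q = g (Q - I)" if "Q \<in># Qs" for Q
  proof -
    have "g ((Q - I) \<union> (Q \<inter> I)) = g (Q - I)" using QU that IU by (intro gabsorb gJ) auto
    moreover have "(Q - I) \<union> (Q \<inter> I) = Q" by auto
    ultimately show ?thesis by simp
  qed
  have "image_mset g Qs = image_mset (\<lambda>Q. g (Q - I)) Qs" by (rule image_mset_cong) (rule e1)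
  then have "(\<Sum>Q\<in>#Qs. g Q) = (\<Sum>Q\<in>#Qs. g (Q - I))" by simp
  also have "\<dots> = (\<Sum>P\<in>#image_mset (\<lambda>Q. Q - I) Qs. g P)" by (simp add: multiset.map_comp comp_def)
  also have "\<dots> = (\<Sum>P\<in>#filter_mset (\<lambda>P. P \<noteq> {}) (image_mset (\<lambda>Q. Q - I) Qs). g P)"
    by (rule sum_filter_zero) (auto simp: g0)
  finally have s: "(\<Sum>Q\<in>#Qs. g Q) = (\<Sum>P\<in>#filter_mset (\<lambda>P. P \<noteq> {}) (image_mset (\<lambda>Q. Q - I) Qs). g P)" .
  have un: "\<Union>(set_mset (filter_mset (\<lambda>P. P \<noteq> {}) (image_mset (\<lambda>Q. Q - I) Qs))) = \<Union>(set_mset Qs) - I"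
    by auto
  have "g (\<Union>(set_mset Qs)) = g ((\<Union>(set_mset Qs) - I) \<union> (\<Union>(set_mset Qs) \<inter> I))"
    by (metis Un_Diff_Int)
  also have "\<dots> = g (\<Union>(set_mset Qs) - I)" using QU IU by (intro gabsorb gJ) auto
  finally show ?thesis unfolding Dg_def s un by simp
qed

end


lemma two_elems: assumes "2 \<le> size M" shows "\<exists>a b N. M = add_mset a (add_mset b N)"
proof (cases M)
  case empty
  then show ?thesis using \<open>2 \<le> size M\<close> by simp
next
  case (add a M')
  then show ?thesis using \<open>2 \<le> size M\<close> by (cases M') auto
qed

lemma IK_pair:
  assumes "2 \<le> size Qs" "q \<in> IK Qs"
  shows "\<exists>Q1 Q2 R. Qs = add_mset Q1 (add_mset Q2 R) \<and> q \<in> Q1 \<and> q \<in> Q2"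
proof -
  have "2 \<le> size (filter_mset (\<lambda>Q. q \<in> Q) Qs)" using assms by (simp add: IK_def)
  then obtain a b N where ab: "filter_mset (\<lambda>Q. q \<in> Q) Qs = add_mset a (add_mset b N)"
    using two_elems by blast
  have "a \<in># filter_mset (\<lambda>Q. q \<in> Q) Qs" "b \<in># filter_mset (\<lambda>Q. q \<in> Q) Qs" unfolding ab by simp_all
  then have q: "q \<in> a" "q \<in> b" by simp_all
  have "{#a, b#} \<subseteq># filter_mset (\<lambda>Q. q \<in> Q) Qs" unfolding ab by simp
  also have "\<dots> \<subseteq># Qs" by simp
  finally have sub: "{#a, b#} \<subseteq># Qs" .
  have "Qs = add_mset a (add_mset b (Qs - {#a, b#}))"
    using subset_mset.add_diff_inverse[OF sub] by simp
  then show ?thesis using q by blast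
qed

lemma Dg_small: "size M \<le> 1 \<Longrightarrow> g {} = 0 \<Longrightarrow> Dg g M = 0"
  by (cases M; cases "M = {#}") (auto simp: Dg_def)

context
  fixes g :: "nat set \<Rightarrow> real" and U :: "nat set"
  assumes pg: "polym g U"
begin

lemma IK_sub: "\<forall>Q\<in>#Qs. Q \<subseteq> U \<Longrightarrow> IK Qs \<subseteq> U"
proof
  fix q assume QU: "\<forall>Q\<in>#Qs. Q \<subseteq> U" and q: "q \<in> IK Qs"
  then have "2 \<le> size Qs" by (auto simp: IK_def split: if_splits)
  then obtain Q1 Q2 R where "Qs = add_mset Q1 (add_mset Q2 R)" "q \<in> Q1" using IK_pair q by blast
  then show "q \<in> U" using QU by auto
qed

lemma Ps_sub: "\<forall>Q\<in>#Qs. Q \<subseteq> U \<Longrightarrow> \<forall>P\<in>#Ps Qs. P \<subseteq> U"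
  unfolding Ps_def by auto

lemma main_iff:
  assumes sz: "2 \<le> size Qs" and QU: "\<forall>Q\<in>#Qs. Q \<subseteq> U" and fU: "finite U"
  shows "Dg g Qs = 0 \<longleftrightarrow> g (IK Qs) = 0 \<and> Dg g (Ps Qs) = 0"
proof
  assume D0: "Dg g Qs = 0"
  have IU: "IK Qs \<subseteq> U" using QU by (rule IK_sub)
  have gq: "g {q} = 0" if q: "q \<in> IK Qs" for q
  proof -
    obtain Q1 Q2 R where QR: "Qs = add_mset Q1 (add_mset Q2 R)" "q \<in> Q1" "q \<in> Q2"
      using IK_pair[OF sz q] by blast
    have "g {q} \<le> g (Q1 \<inter> Q2)" using QR QU by (intro gmono[OF pg]) auto
    also have "\<dots> \<le> Dg g Qs" using QU unfolding QR by (intro Dg_pair[OF pg])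
    finally show ?thesis using D0 gnn[OF pg, of "{q}"] q IU by auto
  qed
  have "g (IK Qs) \<le> (\<Sum>q\<in>IK Qs. g {q})" using IU fU by (intro g_finite_sum[OF pg]) (auto intro: finite_subset)
  also have "\<dots> = 0" using gq by simp
  finally have gI: "g (IK Qs) = 0" using gnn[OF pg IU] by simp
  then show "g (IK Qs) = 0 \<and> Dg g (Ps Qs) = 0"
    using D0 Dg_strip[OF pg QU IU gI] by (simp add: Ps_def)
next
  assume h: "g (IK Qs) = 0 \<and> Dg g (Ps Qs) = 0"
  have IU: "IK Qs \<subseteq> U" using QU by (rule IK_sub)
  show "Dg g Qs = 0" using h Dg_strip[OF pg QU IU] by (simp add: Ps_def)
qed

lemma can_iff:
  assumes sz: "2 \<le> size Qs" and QU: "\<forall>Q\<in>#Qs. Q \<subseteq> U"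
  shows "Dg g (snd (the (can (C, Qs)))) = 0 \<longleftrightarrow> g (IK Qs) = 0 \<and> Dg g (Ps Qs) = 0"
proof -
  let ?I = "IK Qs" and ?P = "Ps Qs"
  have IU: "?I \<subseteq> U" using QU by (rule IK_sub)
  have PU: "\<forall>P\<in>#?P. P \<subseteq> U" using QU by (rule Ps_sub)
  have g0': "g {} = 0" by (rule g0[OF pg])
  consider (a) "?I \<noteq> {} \<and> size ?P \<le> 1" | (b) "?I = {}" | (c) "?I \<noteq> {}" "\<not> size ?P \<le> 1" by blast
  then show ?thesis
  proof cases
    case a
    then have "can (C, Qs) = Some (C, {#?I, ?I#})" using sz by (simp add: can_def)
    moreover have "Dg g {#?I, ?I#} = g ?I" by (simp add: Dg_def)
    moreover have "Dg g ?P = 0" using a g0' by (intro Dg_small) auto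
    ultimately show ?thesis by simp
  next
    case b
    then have "can (C, Qs) = Some (C, ?P)" using sz by (simp add: can_def)
    then show ?thesis using b g0' by simp
  next
    case c
    then have cn: "can (C, Qs) = Some (C, {#?I, ?I#} + ?P)" using sz by (simp add: can_def)
    have PUn: "\<Union>(set_mset ?P) \<subseteq> U" using PU by auto
    have DM: "Dg g ({#?I, ?I#} + ?P) = 2 * g ?I + (\<Sum>P\<in>#?P. g P) - g (?I \<union> \<Union>(set_mset ?P))"
      by (simp add: Dg_def)
    have ub: "g (?I \<union> \<Union>(set_mset ?P)) \<le> g ?I + g (\<Union>(set_mset ?P))" using IU PUn by (intro gadd[OF pg])
    have dn: "0 \<le> Dg g ?P" using PU by (rule Dg_nn[OF pg])
    have gi: "0 \<le> g ?I" using IU by (rule gnn[OF pg])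
    show ?thesis
    proof
      assume "Dg g (snd (the (can (C, Qs)))) = 0"
      then have "Dg g ({#?I, ?I#} + ?P) = 0" using cn by simp
      then have "g ?I + Dg g ?P \<le> 0" using DM ub unfolding Dg_def by linarith
      then show "g ?I = 0 \<and> Dg g ?P = 0" using dn gi by linarith
    next
      assume h: "g ?I = 0 \<and> Dg g ?P = 0"
      then have "g (\<Union>(set_mset ?P) \<union> ?I) = g (\<Union>(set_mset ?P))" using IU PUn by (intro gabsorb[OF pg]) auto
      then have "Dg g ({#?I, ?I#} + ?P) = 0" using DM h unfolding Dg_def by (simp add: Un_commute)
      then show "Dg g (snd (the (can (C, Qs)))) = 0" using cn by simp
    qed
  qed
qed

end


definition coin :: "bool pmf" where "coin = pmf_of_set UNIV"

definition pS :: "nat set \<Rightarrow> outcome pmf" where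
  "pS S = map_pmf (\<lambda>b j. if b \<and> j \<in> S then 1 else 0) coin"

lemma ent_coin: "ent_ext coin = 1"
proof -
  have "ent_ext coin = (\<Sum>b\<in>(UNIV::bool set). ennreal (- pmf coin b * log 2 (pmf coin b)))"
    unfolding ent_ext_def by (simp add: nn_integral_count_space_finite)
  also have "\<dots> = 2 * ennreal (1/2)"
    by (simp add: coin_def log_divide UNIV_bool)
  also have "\<dots> = ennreal 2 * ennreal (1/2)" by simp
  also have "\<dots> = ennreal (2 * (1/2))" by (rule ennreal_mult[symmetric]) auto
  also have "\<dots> = 1" by simp
  finally show ?thesis .
qed

lemma ent_coin_inj: "f True \<noteq> f False \<Longrightarrow> ent_ext (map_pmf f coin) = 1"
proof -
  assume f: "f True \<noteq> f False"
  have "ent_ext (map_pmf f coin) = ent_ext (map_pmf id coin)"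
    by (rule ent_eq) (use f in \<open>auto, (metis (full_types))+\<close>)
  then show ?thesis by (simp add: ent_coin)
qed

lemma ent_coin_const: "f True = f False \<Longrightarrow> ent_ext (map_pmf f coin) = 0"
proof -
  assume f: "f True = f False"
  then have "f = (\<lambda>_. f True)" by (metis (full_types))
  then have "map_pmf f coin = return_pmf (f True)" by (metis map_pmf_const)
  then show ?thesis by (simp add: ent_return)
qed

lemma ent_coin_le: "ent_ext (map_pmf f coin) \<le> 1"
  by (cases "f True = f False") (simp_all add: ent_coin_const ent_coin_inj)

lemma Fe_pS: "Fe (pS S) A = (if A \<inter> S \<noteq> {} then 1 else 0)"
proof -
  let ?e = "\<lambda>b (j::nat). if b \<and> j \<in> S then 1 else (0::nat)"
  have m: "map_pmf (Xs A) (pS S) = map_pmf (Xs A \<circ> ?e) coin"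
    unfolding pS_def by (simp add: pmf.map_comp)
  have "(Xs A \<circ> ?e) True = (Xs A \<circ> ?e) False \<longleftrightarrow> A \<inter> S = {}"
    unfolding comp_def Xs_eq by auto
  then show ?thesis unfolding Fe_def m
    by (cases "A \<inter> S = {}") (simp_all add: ent_coin_const ent_coin_inj)
qed

lemma fe_pS: "finite_entropies n (pS S)"
  unfolding finite_entropies_def pS_def
  by (auto simp: pmf.map_comp intro: le_less_trans[OF ent_coin_le])

lemma sum_ind: "(\<Sum>Q\<in>#M. (if P Q then 1 else 0 :: real)) = real (size (filter_mset P M))"
  by (induction M) auto

lemma valid_pS:
  "valid (pS S) (C, Qs) \<longleftrightarrow> C \<inter> S \<noteq> {} \<or> size (filter_mset (\<lambda>Q. Q \<inter> S \<noteq> {}) Qs) \<le> 1"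
proof (cases "C \<inter> S = {}")
  case False
  then have "gC (pS S) C = (\<lambda>_. 0)" by (auto simp: fun_eq_iff gC_def Fe_pS)
  then show ?thesis using False by (simp add: valid_Dg Dg_def)
next
  case True
  then have g: "gC (pS S) C = (\<lambda>A. if A \<inter> S \<noteq> {} then 1 else 0)"
    by (auto simp: fun_eq_iff gC_def Fe_pS)
  have u: "\<Union>(set_mset Qs) \<inter> S \<noteq> {} \<longleftrightarrow> filter_mset (\<lambda>Q. Q \<inter> S \<noteq> {}) Qs \<noteq> {#}"
    by (auto simp: filter_mset_eq_conv)
  have "valid (pS S) (C, Qs) \<longleftrightarrow> real (size (filter_mset (\<lambda>Q. Q \<inter> S \<noteq> {}) Qs))
      - (if filter_mset (\<lambda>Q. Q \<inter> S \<noteq> {}) Qs \<noteq> {#} then 1 else 0) = 0"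
    unfolding valid_Dg Dg_def g sum_ind u by simp
  also have "\<dots> \<longleftrightarrow> size (filter_mset (\<lambda>Q. Q \<inter> S \<noteq> {}) Qs) \<le> 1"
  proof -
    define F where "F = filter_mset (\<lambda>Q. Q \<inter> S \<noteq> {}) Qs"
    have e: "F = {#} \<longleftrightarrow> size F = 0" by simp
    have "F \<noteq> {#} \<Longrightarrow> 1 \<le> size F" using e by linarith
    then show ?thesis unfolding F_def[symmetric] by (cases "F = {#}") auto
  qed
  finally show ?thesis using True by simp
qed


definition V :: "nat set \<Rightarrow> nat set \<Rightarrow> nat set multiset \<Rightarrow> bool" where
  "V S C Qs \<longleftrightarrow> C \<inter> S \<noteq> {} \<or> size (filter_mset (\<lambda>Q. Q \<inter> S \<noteq> {}) Qs) \<le> 1"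

lemma V_small: "size Qs \<le> 1 \<Longrightarrow> V S C Qs"
  unfolding V_def by (meson order_trans size_filter_mset_lesseq)

lemma V_big:
  assumes pu: "pure (C, Qs)" and sz: "2 \<le> size Qs" and CS: "C \<inter> S = {}" and US: "\<Union>(set_mset Qs) \<subseteq> S"
  shows "\<not> V S C Qs"
proof -
  have "filter_mset (\<lambda>Q. Q \<inter> S \<noteq> {}) Qs = filter_mset (\<lambda>Q. True) Qs"
    using pu US unfolding pure_def by (intro filter_mset_cong0) auto
  then have "filter_mset (\<lambda>Q. Q \<inter> S \<noteq> {}) Qs = Qs" by simp
  then show ?thesis using sz CS unfolding V_def by simp
qed

lemma IK_in_union: "IK Qs \<subseteq> \<Union>(set_mset Qs)"
proof
  fix q assume q: "q \<in> IK Qs"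
  then have "2 \<le> size Qs" by (auto simp: IK_def split: if_splits)
  then obtain Q1 Q2 R where "Qs = add_mset Q1 (add_mset Q2 R)" "q \<in> Q1" using IK_pair q by blast
  then show "q \<in> \<Union>(set_mset Qs)" by auto
qed

lemma V_single:
  assumes sz: "2 \<le> size Qs" and q: "q \<notin> C"
  shows "V {q} C Qs \<longleftrightarrow> q \<notin> IK Qs"
proof -
  have "filter_mset (\<lambda>Q. Q \<inter> {q} \<noteq> {}) Qs = filter_mset (\<lambda>Q. q \<in> Q) Qs"
    by (rule filter_mset_cong0) auto
  then show ?thesis using sz q unfolding V_def IK_def by auto
qed

lemma size_filter_or:
  "size (filter_mset (\<lambda>Q. P Q \<or> R Q) M) + size (filter_mset (\<lambda>Q. P Q \<and> R Q) M)
   = size (filter_mset P M) + size (filter_mset R M)"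
  by (induction M) auto

lemma size_filter_Ps:
  "size (filter_mset (\<lambda>P. x \<in> P) (filter_mset (\<lambda>P. P \<noteq> {}) (image_mset (\<lambda>Q. Q - I) M)))
   \<le> size (filter_mset (\<lambda>Q. x \<in> Q) M)"
  by (induction M) auto

lemma notIK_le1: "2 \<le> size Qs \<Longrightarrow> x \<notin> IK Qs \<Longrightarrow> size (filter_mset (\<lambda>Q. x \<in> Q) Qs) \<le> 1"
  unfolding IK_def by auto

lemma Ps_le1:
  assumes sz: "2 \<le> size Qs"
  shows "size (filter_mset (\<lambda>P. x \<in> P) (Ps Qs)) \<le> 1"
proof (cases "x \<in> IK Qs")
  case True
  have e: "filter_mset (\<lambda>P. x \<in> P) (Ps Qs) = {#}"
    using True unfolding Ps_def by auto
  show ?thesis unfolding e by simp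
next
  case False
  then show ?thesis using size_filter_Ps[of x "IK Qs" Qs] notIK_le1[OF sz False]
    unfolding Ps_def by linarith
qed

definition blk :: "nat set multiset \<Rightarrow> nat \<Rightarrow> nat \<Rightarrow> bool" where
  "blk M x y \<longleftrightarrow> (\<exists>P\<in>#M. x \<in> P \<and> y \<in> P)"

definition sep :: "nat set multiset \<Rightarrow> nat \<Rightarrow> nat \<Rightarrow> bool" where
  "sep M x y \<longleftrightarrow> x \<in> \<Union>(set_mset M) \<and> y \<in> \<Union>(set_mset M) \<and> \<not> blk M x y"

lemma size_filter_pos: "a \<in># M \<Longrightarrow> P a \<Longrightarrow> 1 \<le> size (filter_mset P M)"
proof -
  assume "a \<in># M" "P a"
  then have "a \<in># filter_mset P M" by simp
  then have "filter_mset P M \<noteq> {#}" by auto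
  then have "0 < size (filter_mset P M)" by (simp only: nonempty_has_size)
  then show ?thesis by simp
qed

lemma size_elem: "1 \<le> size M \<Longrightarrow> (\<And>a. a \<in># M \<Longrightarrow> thesis) \<Longrightarrow> thesis"
  by (cases M) auto

lemma V_pair:
  assumes sz: "2 \<le> size Qs" and x: "x \<notin> C" "x \<notin> IK Qs" and y: "y \<notin> C" "y \<notin> IK Qs"
  shows "V {x, y} C Qs \<longleftrightarrow> \<not> sep (Ps Qs) x y"
proof -
  let ?I = "IK Qs"
  define a where "a = size (filter_mset (\<lambda>Q. x \<in> Q) Qs)"
  define b where "b = size (filter_mset (\<lambda>Q. y \<in> Q) Qs)"
  define c where "c = size (filter_mset (\<lambda>Q. x \<in> Q \<and> y \<in> Q) Qs)"
  define d where "d = size (filter_mset (\<lambda>Q. x \<in> Q \<or> y \<in> Q) Qs)"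
  have abcd: "d + c = a + b" unfolding a_def b_def c_def d_def by (rule size_filter_or)
  have a1: "a \<le> 1" "b \<le> 1" unfolding a_def b_def using notIK_le1[OF sz] x y by auto
  have ca: "c \<le> a" unfolding a_def c_def
  proof -
    have "filter_mset (\<lambda>Q. x \<in> Q \<and> y \<in> Q) Qs = filter_mset (\<lambda>Q. y \<in> Q) (filter_mset (\<lambda>Q. x \<in> Q) Qs)"
      by (simp add: filter_filter_mset)
    then show "size (filter_mset (\<lambda>Q. x \<in> Q \<and> y \<in> Q) Qs) \<le> size (filter_mset (\<lambda>Q. x \<in> Q) Qs)"
      by (metis size_filter_mset_lesseq)
  qed
  have d_eq: "filter_mset (\<lambda>Q. Q \<inter> {x, y} \<noteq> {}) Qs = filter_mset (\<lambda>Q. x \<in> Q \<or> y \<in> Q) Qs"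
    by (rule filter_mset_cong0) auto
  have ax: "1 \<le> a \<longleftrightarrow> x \<in> \<Union>(set_mset (Ps Qs))"
  proof
    assume "1 \<le> a"
    then obtain Q where "Q \<in># filter_mset (\<lambda>Q. x \<in> Q) Qs" unfolding a_def
      by (rule size_elem)
    then show "x \<in> \<Union>(set_mset (Ps Qs))" using x unfolding Ps_def by auto
  next
    assume "x \<in> \<Union>(set_mset (Ps Qs))"
    then obtain Q where "Q \<in># Qs" "x \<in> Q" unfolding Ps_def by auto
    then show "1 \<le> a" unfolding a_def by (rule size_filter_pos)
  qed
  have by': "1 \<le> b \<longleftrightarrow> y \<in> \<Union>(set_mset (Ps Qs))"
  proof
    assume "1 \<le> b"
    then obtain Q where "Q \<in># filter_mset (\<lambda>Q. y \<in> Q) Qs" unfolding b_def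
      by (rule size_elem)
    then show "y \<in> \<Union>(set_mset (Ps Qs))" using y unfolding Ps_def by auto
  next
    assume "y \<in> \<Union>(set_mset (Ps Qs))"
    then obtain Q where "Q \<in># Qs" "y \<in> Q" unfolding Ps_def by auto
    then show "1 \<le> b" unfolding b_def by (rule size_filter_pos)
  qed
  have cb: "1 \<le> c \<longleftrightarrow> blk (Ps Qs) x y"
  proof
    assume "1 \<le> c"
    then obtain Q where "Q \<in># filter_mset (\<lambda>Q. x \<in> Q \<and> y \<in> Q) Qs" unfolding c_def
      by (rule size_elem)
    then have "Q - ?I \<in># Ps Qs" "x \<in> Q - ?I" "y \<in> Q - ?I" using x y unfolding Ps_def by auto
    then show "blk (Ps Qs) x y" unfolding blk_def by blast
  next
    assume "blk (Ps Qs) x y"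
    then obtain Q where "Q \<in># Qs" "x \<in> Q \<and> y \<in> Q" unfolding Ps_def blk_def by auto
    then show "1 \<le> c" unfolding c_def by (rule size_filter_pos)
  qed
  have "V {x, y} C Qs \<longleftrightarrow> d \<le> 1" using x y unfolding V_def d_def d_eq by auto
  also have "\<dots> \<longleftrightarrow> \<not> sep (Ps Qs) x y" unfolding sep_def using abcd a1 ca ax by' cb by auto
  finally show ?thesis .
qed


definition goodM :: "nat set multiset \<Rightarrow> bool" where
  "goodM M \<longleftrightarrow> (\<forall>P\<in>#M. P \<noteq> {}) \<and> (\<forall>x. size (filter_mset (\<lambda>P. x \<in> P) M) \<le> 1)"

lemma size_le1_eq: "size N \<le> 1 \<Longrightarrow> a \<in># N \<Longrightarrow> b \<in># N \<Longrightarrow> a = b"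
  by (cases N) (auto dest: size_elem[of _ "False"] simp: Suc_le_eq)

lemma uniq:
  assumes g: "goodM M" and "P1 \<in># M" "P2 \<in># M" "x \<in> P1" "x \<in> P2"
  shows "P1 = P2"
proof -
  have "size (filter_mset (\<lambda>P. x \<in> P) M) \<le> 1" using g by (simp add: goodM_def)
  moreover have "P1 \<in># filter_mset (\<lambda>P. x \<in> P) M" "P2 \<in># filter_mset (\<lambda>P. x \<in> P) M" using assms by simp_all
  ultimately show ?thesis by (rule size_le1_eq)
qed

lemma count_le1:
  assumes g: "goodM M"
  shows "count M P \<le> 1"
proof (cases "P \<in># M")
  case True
  then obtain x where x: "x \<in> P" using g by (auto simp: goodM_def)
  have "count M P = count (filter_mset (\<lambda>P. x \<in> P) M) P" using x by simp
  also have "\<dots> \<le> size (filter_mset (\<lambda>P. x \<in> P) M)" by (rule count_le_size)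
  also have "\<dots> \<le> 1" using g by (simp add: goodM_def)
  finally show ?thesis .
next
  case False then show ?thesis by (simp add: not_in_iff)
qed

lemma sep_exists:
  assumes g: "goodM M" and sz: "2 \<le> size M" and P: "P \<in># M" and x: "x \<in> P"
  shows "\<exists>y\<in>\<Union>(set_mset M). sep M x y"
proof -
  have "1 \<le> size (M - {#P#})" using sz P by (simp add: size_Diff_submset)
  then obtain P2 where P2: "P2 \<in># M - {#P#}" by (rule size_elem)
  then have P2M: "P2 \<in># M" by (meson in_diffD)
  then obtain y where y: "y \<in> P2" using g by (auto simp: goodM_def)
  have "\<not> blk M x y"
  proof
    assume "blk M x y"
    then obtain P3 where P3: "P3 \<in># M" "x \<in> P3" "y \<in> P3" by (auto simp: blk_def)
    have "P3 = P" using uniq[OF g P3(1) P P3(2) x] .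
    moreover have "P3 = P2" using uniq[OF g P3(1) P2M P3(3) y] .
    ultimately have "P \<in># M - {#P#}" using P2 by simp
    then have "2 \<le> count M P" using P by (simp add: in_diff_count)
    then show False using count_le1[OF g, of P] by simp
  qed
  then show ?thesis using P x P2M y unfolding sep_def by blast
qed

lemma sep_size: "sep M x y \<Longrightarrow> 2 \<le> size M"
proof (rule ccontr)
  assume s: "sep M x y" and "\<not> 2 \<le> size M"
  then have "size M \<le> 1" by simp
  moreover obtain P1 P2 where "P1 \<in># M" "x \<in> P1" "P2 \<in># M" "y \<in> P2" using s by (auto simp: sep_def)
  ultimately have "P1 = P2" by (intro size_le1_eq)
  then show False using s \<open>P1 \<in># M\<close> \<open>x \<in> P1\<close> \<open>y \<in> P2\<close> by (auto simp: sep_def blk_def)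
qed

lemma block_sub:
  assumes g: "goodM M" and g': "goodM M'" and sz: "2 \<le> size M" and W: "\<forall>P\<in>#M. P \<subseteq> W" "\<forall>P\<in>#M'. P \<subseteq> W"
    and eq: "\<And>x y. x \<in> W \<Longrightarrow> y \<in> W \<Longrightarrow> sep M x y \<longleftrightarrow> sep M' x y"
    and P: "P \<in># M" and P': "P' \<in># M'" and x: "x \<in> P" "x \<in> P'"
  shows "P \<subseteq> P'"
proof
  fix z assume z: "z \<in> P"
  obtain y1 where y1: "y1 \<in> \<Union>(set_mset M)" "sep M z y1" using sep_exists[OF g sz P z] by blast
  have zW: "z \<in> W" "y1 \<in> W" "x \<in> W" using W P z y1(1) x by auto
  then have "sep M' z y1" using eq y1 by simp
  then have zM': "z \<in> \<Union>(set_mset M')" by (simp add: sep_def)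
  have "blk M x z" using P x z by (auto simp: blk_def)
  then have "\<not> sep M x z" by (simp add: sep_def)
  then have "\<not> sep M' x z" using eq zW by simp
  moreover have "x \<in> \<Union>(set_mset M')" using P' x by auto
  ultimately have "blk M' x z" using zM' unfolding sep_def by blast
  then obtain P3 where P3: "P3 \<in># M'" "x \<in> P3" "z \<in> P3" by (auto simp: blk_def)
  have "P3 = P'" using uniq[OF g' P3(1) P' P3(2) x(2)] .
  then show "z \<in> P'" using P3 by simp
qed

lemma block_lemma:
  assumes g: "goodM M" and g': "goodM M'" and W: "\<forall>P\<in>#M. P \<subseteq> W" "\<forall>P\<in>#M'. P \<subseteq> W"
    and eq: "\<And>x y. x \<in> W \<Longrightarrow> y \<in> W \<Longrightarrow> sep M x y \<longleftrightarrow> sep M' x y"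
    and sz: "2 \<le> size M"
  shows "M = M'"
proof -
  obtain P0 where P0: "P0 \<in># M" using sz by (metis size_elem one_le_numeral order_trans)
  obtain x0 where x0: "x0 \<in> P0" using g P0 by (auto simp: goodM_def)
  obtain y0 where y0: "y0 \<in> \<Union>(set_mset M)" "sep M x0 y0" using sep_exists[OF g sz P0 x0] by blast
  have "sep M' x0 y0" using eq y0 W P0 x0 by auto
  then have sz': "2 \<le> size M'" by (rule sep_size)
  have eq': "\<And>x y. x \<in> W \<Longrightarrow> y \<in> W \<Longrightarrow> sep M' x y \<longleftrightarrow> sep M x y" using eq by simp
  have mem: "P \<in># M'" if P: "P \<in># M" for P
  proof -
    obtain x where x: "x \<in> P" using g P by (auto simp: goodM_def)
    obtain y where "y \<in> \<Union>(set_mset M)" "sep M x y" using sep_exists[OF g sz P x] by blast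
    moreover have "x \<in> W" "y \<in> W" using W P x \<open>y \<in> \<Union>(set_mset M)\<close> by auto
    ultimately have "sep M' x y" using eq by simp
    then obtain P' where P': "P' \<in># M'" "x \<in> P'" by (auto simp: sep_def)
    have "P \<subseteq> P'" by (rule block_sub[OF g g' sz W eq P P'(1) x P'(2)])
    moreover have "P' \<subseteq> P" by (rule block_sub[OF g' g sz' W(2) W(1) eq' P'(1) P P'(2) x])
    ultimately show ?thesis using P' by simp
  qed
  have mem': "P \<in># M" if P: "P \<in># M'" for P
  proof -
    obtain x where x: "x \<in> P" using g' P by (auto simp: goodM_def)
    obtain y where "y \<in> \<Union>(set_mset M')" "sep M' x y" using sep_exists[OF g' sz' P x] by blast
    moreover have "x \<in> W" "y \<in> W" using W P x \<open>y \<in> \<Union>(set_mset M')\<close> by auto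
    ultimately have "sep M x y" using eq by simp
    then obtain P' where P': "P' \<in># M" "x \<in> P'" by (auto simp: sep_def)
    have "P \<subseteq> P'" by (rule block_sub[OF g' g sz' W(2) W(1) eq' P P'(1) x P'(2)])
    moreover have "P' \<subseteq> P" by (rule block_sub[OF g g' sz W eq P'(1) P P'(2) x])
    ultimately show ?thesis using P' by simp
  qed
  show ?thesis
  proof (rule multiset_eqI)
    fix P
    show "count M P = count M' P"
    proof (cases "P \<in># M")
      case True
      then have "P \<in># M'" by (rule mem)
      then have "0 < count M P" "0 < count M' P" using True by simp_all
      then show ?thesis using count_le1[OF g, of P] count_le1[OF g', of P] by linarith
    next
      case False
      then have "P \<notin># M'" using mem' by blast
      then show ?thesis using False by (simp add: not_in_iff)
    qed
  qed
qed


lemma V_equiv: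
  assumes "cmi_equiv n (C, Qs) (C', Qs')"
  shows "V S C Qs \<longleftrightarrow> V S C' Qs'"
proof -
  have "valid (pS S) (C, Qs) \<longleftrightarrow> valid (pS S) (C', Qs')"
    using assms fe_pS[of n S] unfolding cmi_equiv_def by blast
  then show ?thesis unfolding V_def valid_pS .
qed

lemma pure_disj: "pure (C, Qs) \<Longrightarrow> C \<inter> \<Union>(set_mset Qs) = {}"
  unfolding pure_def by auto

lemma Ps_id: "pure (C, Qs) \<Longrightarrow> IK Qs = {} \<Longrightarrow> Ps Qs = Qs"
proof -
  assume pu: "pure (C, Qs)" and I: "IK Qs = {}"
  have "image_mset (\<lambda>Q. Q - IK Qs) Qs = Qs" unfolding I by simp
  then have "Ps Qs = filter_mset (\<lambda>P. P \<noteq> {}) Qs" unfolding Ps_def by simp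
  also have "\<dots> = filter_mset (\<lambda>P. True) Qs" using pu unfolding pure_def by (intro filter_mset_cong0) auto
  finally show ?thesis by simp
qed

lemma goodM_Ps: "2 \<le> size Qs \<Longrightarrow> goodM (Ps Qs)"
  unfolding goodM_def using Ps_le1 by (auto simp: Ps_def)

lemma only_if:
  assumes pu: "pure (C, Qs)" and pu': "pure (C', Qs')"
    and eqV: "\<And>S. V S C Qs \<longleftrightarrow> V S C' Qs'"
  shows "can (C, Qs) = can (C', Qs')"
proof -
  have d: "C \<inter> \<Union>(set_mset Qs) = {}" "C' \<inter> \<Union>(set_mset Qs') = {}" using pu pu' by (simp_all add: pure_disj)
  have s1: "2 \<le> size Qs \<longleftrightarrow> 2 \<le> size Qs'"
  proof
    assume sz: "2 \<le> size Qs"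
    show "2 \<le> size Qs'"
    proof (rule ccontr)
      assume "\<not> 2 \<le> size Qs'"
      then have "V (\<Union>(set_mset Qs)) C' Qs'" by (intro V_small) simp
      moreover have "\<not> V (\<Union>(set_mset Qs)) C Qs" using pu sz d by (intro V_big) auto
      ultimately show False using eqV by blast
    qed
  next
    assume sz: "2 \<le> size Qs'"
    show "2 \<le> size Qs"
    proof (rule ccontr)
      assume "\<not> 2 \<le> size Qs"
      then have "V (\<Union>(set_mset Qs')) C Qs" by (intro V_small) simp
      moreover have "\<not> V (\<Union>(set_mset Qs')) C' Qs'" using pu' sz d by (intro V_big) auto
      ultimately show False using eqV by blast
    qed
  qed
  show ?thesis
  proof (cases "2 \<le> size Qs")
    case False
    then show ?thesis using s1 by (simp add: can_def)
  next
    case sz: True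
    then have sz': "2 \<le> size Qs'" using s1 by simp
    have CC: "C = C'"
    proof (rule equalityI; rule subsetI; rule ccontr)
      fix i assume i: "i \<in> C" "i \<notin> C'"
      let ?S = "insert i (\<Union>(set_mset Qs'))"
      have "V ?S C Qs" using i unfolding V_def by auto
      moreover have "\<not> V ?S C' Qs'" using pu' sz' d i by (intro V_big) auto
      ultimately show False using eqV by blast
    next
      fix i assume i: "i \<in> C'" "i \<notin> C"
      let ?S = "insert i (\<Union>(set_mset Qs))"
      have "V ?S C' Qs'" using i unfolding V_def by auto
      moreover have "\<not> V ?S C Qs" using pu sz d i by (intro V_big) auto
      ultimately show False using eqV by blast
    qed
    have II: "IK Qs = IK Qs'"
    proof (rule set_eqI)
      fix q
      show "q \<in> IK Qs \<longleftrightarrow> q \<in> IK Qs'"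
      proof (cases "q \<in> C")
        case True
        then show ?thesis using IK_in_union[of Qs] IK_in_union[of Qs'] d CC by blast
      next
        case False
        then show ?thesis using V_single[OF sz False] V_single[OF sz', of q] CC eqV by simp
      qed
    qed
    define I where "I = IK Qs"
    define W where "W = - (C \<union> I)"
    have WP: "\<forall>P\<in>#Ps Qs. P \<subseteq> W" using pu unfolding Ps_def W_def I_def pure_def by auto
    have WP': "\<forall>P\<in>#Ps Qs'. P \<subseteq> W" using pu' unfolding Ps_def W_def I_def II CC pure_def by auto
    have sepeq: "sep (Ps Qs) x y \<longleftrightarrow> sep (Ps Qs') x y" if "x \<in> W" "y \<in> W" for x y
    proof -
      have xy: "x \<notin> C" "x \<notin> IK Qs" "y \<notin> C" "y \<notin> IK Qs" using that unfolding W_def I_def by auto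
      have xy': "x \<notin> C'" "x \<notin> IK Qs'" "y \<notin> C'" "y \<notin> IK Qs'" using xy CC II by auto
      show ?thesis using V_pair[OF sz xy] V_pair[OF sz' xy'] eqV[of "{x, y}"] by simp
    qed
    have blocks: "(size (Ps Qs) \<le> 1 \<and> size (Ps Qs') \<le> 1) \<or> Ps Qs = Ps Qs'"
    proof (cases "2 \<le> size (Ps Qs)")
      case True
      then have "Ps Qs = Ps Qs'" using block_lemma[OF goodM_Ps[OF sz] goodM_Ps[OF sz'] WP WP' sepeq] by blast
      then show ?thesis by simp
    next
      case False
      show ?thesis
      proof (cases "2 \<le> size (Ps Qs')")
        case True
        then have "Ps Qs' = Ps Qs" using block_lemma[OF goodM_Ps[OF sz'] goodM_Ps[OF sz] WP' WP] sepeq by blast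
        then show ?thesis by simp
      next
        case False
        then show ?thesis using \<open>\<not> 2 \<le> size (Ps Qs)\<close> by simp
      qed
    qed
    show ?thesis
    proof (cases "IK Qs = {}")
      case True
      then have "Ps Qs = Qs" "Ps Qs' = Qs'" using Ps_id pu pu' II by auto
      then have "Ps Qs = Ps Qs'" using blocks sz by auto
      then show ?thesis using sz sz' CC II by (simp add: can_def)
    next
      case False
      then show ?thesis using blocks sz sz' CC II by (auto simp: can_def)
    qed
  qed
qed

lemma valid_small: "size Qs \<le> 1 \<Longrightarrow> valid p (C, Qs)"
  unfolding valid_Dg by (rule Dg_small) (simp_all add: gC_def)

lemma valid_can:
  assumes cm: "is_cmi n (C, Qs)" and fe: "finite_entropies n p" and sz: "2 \<le> size Qs"
  shows "valid p (C, Qs) \<longleftrightarrow> Dg (gC p C) (snd (the (can (C, Qs)))) = 0"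
proof -
  have C: "C \<subseteq> {1..n}" and QU: "\<forall>Q\<in>#Qs. Q \<subseteq> {1..n}" using cm by (auto simp: is_cmi_def)
  have pg: "polym (gC p C) {1..n}" by (rule gC_polym[OF fe C])
  show ?thesis unfolding valid_Dg main_iff[OF pg sz QU finite_atLeastAtMost] can_iff[OF pg sz QU] ..
qed

theorem mainTheorem1:
  fixes n :: nat and C C' :: "nat set" and Qs Qs' :: "nat set multiset"
  assumes "is_cmi n (C, Qs)" and "is_cmi n (C', Qs')"
    and "pure (C, Qs)" and "pure (C', Qs')"
  shows "cmi_equiv n (C, Qs) (C', Qs') \<longleftrightarrow> can (C, Qs) = can (C', Qs')"
proof
  assume "cmi_equiv n (C, Qs) (C', Qs')"
  then show "can (C, Qs) = can (C', Qs')"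
    using only_if[OF assms(3,4)] V_equiv by blast
next
  assume ceq: "can (C, Qs) = can (C', Qs')"
  show "cmi_equiv n (C, Qs) (C', Qs')"
    unfolding cmi_equiv_def
  proof (intro allI impI)
    fix p assume fe: "finite_entropies n p"
    show "valid p (C, Qs) \<longleftrightarrow> valid p (C', Qs')"
    proof (cases "2 \<le> size Qs")
      case False
      then have "can (C, Qs) = None" by (simp add: can_def)
      then have "\<not> 2 \<le> size Qs'" using ceq by (auto simp: can_def split: if_splits)
      then show ?thesis using False valid_small by simp
    next
      case True
      then have "can (C, Qs) \<noteq> None" by (simp add: can_def split: if_splits)
      then have sz': "2 \<le> size Qs'" using ceq by (auto simp: can_def split: if_splits)
      have "fst (the (can (C, Qs))) = C" "fst (the (can (C', Qs'))) = C'"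
        using True sz' by (auto simp: can_def)
      then have CC: "C = C'" using ceq by simp
      show ?thesis using valid_can[OF assms(1) fe True] valid_can[OF assms(2) fe sz'] ceq CC by simp
    qed
  qed
qed

end
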